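(* Let $q\in\mathbb{N}$ be odd, $\alpha_2\in\mathbb{Z}$ with $\gcd(\alpha_2,q)=1$, and let $q_1>1$, $q_2$ be positive integers with $q_1q_2=\operatorname{rad}(q)$. For $N\in\mathbb{N}$ with $N\le q$ define $$L(q_1):=\sum_{\substack{|x_1|,|x_2|\le N\\ \gcd(x_1^2+\alpha_2x_2^2,q_2)=1}}\left(\frac{x_1^2+\alpha_2x_2^2}{q_1}\right).$$ Then for every $\varepsilon>0$, $L(q_1)\ll_\varepsilon Nq_1^2q^{\varepsilon}$.
   Context: $\operatorname{rad}(q)$ is the product of the distinct primes dividing $q$; $\left(\frac{\cdot}{q_1}\right)$ is the Jacobi symbol. *)

theory Defs
  imports "HOL-Analysis.Analysis" "HOL-Number_Theory.Number_Theory"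
begin

definition rad :: "nat \<Rightarrow> nat" where
  "rad q = (\<Prod>p\<in>prime_factors q. p)"

definition Jacobi :: "int \<Rightarrow> nat \<Rightarrow> int" where
  "Jacobi a n = (\<Prod>p\<in>prime_factors n. Legendre a (int p) ^ multiplicity p n)"

definition Lsum :: "int \<Rightarrow> nat \<Rightarrow> nat \<Rightarrow> nat \<Rightarrow> int" where
  "Lsum \<alpha>2 q1 q2 N =
     (\<Sum>(x1, x2) \<in> {(x1, x2). x1 \<in> {-int N..int N} \<and> x2 \<in> {-int N..int N}
                         \<and> coprime (x1^2 + \<alpha>2 * x2^2) (int q2)}.
        Jacobi (x1^2 + \<alpha>2 * x2^2) q1)"

end

theory Submission
  imports Defs "HOL-Library.FuncSet"
begin


lemma Legendre_cong:
  assumes "[a = b] (mod p)"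
  shows "Legendre a p = Legendre b p"
proof -
  have "[a = 0] (mod p) \<longleftrightarrow> [b = 0] (mod p)"
    using assms by (meson cong_sym cong_trans)
  moreover have "QuadRes p a \<longleftrightarrow> QuadRes p b"
    unfolding QuadRes_def using assms by (meson cong_sym cong_trans)
  ultimately show ?thesis unfolding Legendre_def by simp
qed

lemma Legendre_vals: "Legendre a p \<in> {-1, 0, 1}"
  unfolding Legendre_def by auto

lemma Legendre_abs: "\<bar>Legendre a p\<bar> \<le> 1"
  unfolding Legendre_def by auto

lemma Legendre_one: "p > 1 \<Longrightarrow> Legendre 1 p = 1"
proof -
  assume p: "p > 1"
  have "\<not> [1 = 0] (mod p)" using p by (simp add: cong_def)
  moreover have "QuadRes p 1" unfolding QuadRes_def by (rule exI[of _ 1]) simp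
  ultimately show ?thesis unfolding Legendre_def by simp
qed

lemma vals_cong_eq:
  fixes x y :: int
  assumes "x \<in> {-1,0,1}" "y \<in> {-1,0,1}" "[x = y] (mod int p)" "p > 2"
  shows "x = y"
proof -
  have "int p dvd (x - y)" using assms(3) by (simp add: cong_iff_dvd_diff)
  moreover have "\<bar>x - y\<bar> < int p" using assms by auto
  show ?thesis
  proof (rule ccontr)
    assume "x \<noteq> y"
    hence "\<bar>int p\<bar> \<le> \<bar>x - y\<bar>" using dvd_imp_le_int[of "x - y" "int p"] \<open>int p dvd (x - y)\<close> by simp
    thus False using \<open>\<bar>x - y\<bar> < int p\<close> by simp
  qed
qed

lemma Legendre_mult:
  assumes "prime p" "p > 2"
  shows "Legendre (a * b) (int p) = Legendre a (int p) * Legendre b (int p)"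
proof -
  have "[Legendre (a*b) (int p) = (a*b) ^ ((p - 1) div 2)] (mod int p)"
    using euler_criterion assms by blast
  moreover have "[Legendre a (int p) * Legendre b (int p) = a ^ ((p - 1) div 2) * b ^ ((p - 1) div 2)] (mod int p)"
    using euler_criterion assms cong_mult by blast
  ultimately have "[Legendre (a*b) (int p) = Legendre a (int p) * Legendre b (int p)] (mod int p)"
    by (metis cong_sym cong_trans power_mult_distrib)
  moreover have "Legendre a (int p) * Legendre b (int p) \<in> {-1,0,1}"
    using Legendre_vals[of a "int p"] Legendre_vals[of b "int p"] by auto
  ultimately show ?thesis using vals_cong_eq Legendre_vals assms by blast
qed

lemma nonres_exists:
  fixes p :: int
  assumes "prime p" "p > 2"
  shows "\<exists>r. 0 \<le> r \<and> r < p \<and> Legendre r p = -1"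
proof -
  let ?g = "\<lambda>x::int. x^2 mod p"
  have "\<not> inj_on ?g {0..<p}"
  proof
    assume "inj_on ?g {0..<p}"
    moreover have "?g 1 = ?g (p - 1)"
    proof -
      have "(p-1)^2 = 1 + p * (p - 2)" by (simp add: power2_eq_square algebra_simps)
      thus ?thesis by simp
    qed
    moreover have "(1::int) \<in> {0..<p}" "p - 1 \<in> {0..<p}" using assms by auto
    ultimately have "1 = p - 1" by (meson inj_onD)
    thus False using assms by simp
  qed
  hence "?g ` {0..<p} \<noteq> {0..<p}"
    using eq_card_imp_inj_on[of "{0..<p}" ?g] by (metis finite_atLeastLessThan_int)
  moreover have "?g ` {0..<p} \<subseteq> {0..<p}"
  proof
    fix z assume "z \<in> ?g ` {0..<p}"
    then obtain x where "z = x^2 mod p" by blast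
    thus "z \<in> {0..<p}" using assms by simp
  qed
  ultimately obtain r where r: "r \<in> {0..<p}" "r \<notin> ?g ` {0..<p}" by blast
  have nz: "\<not> [r = 0] (mod p)"
  proof
    assume "[r = 0] (mod p)"
    hence "r = 0" using r(1) by (simp add: cong_def)
    moreover have "?g 0 = 0" by simp
    moreover have "(0::int) \<in> {0..<p}" using assms by simp
    ultimately have "r \<in> ?g ` {0..<p}" by (metis image_eqI)
    thus False using r(2) by blast
  qed
  have nq: "\<not> QuadRes p r"
  proof
    assume "QuadRes p r"
    then obtain y where y: "[y^2 = r] (mod p)" unfolding QuadRes_def by blast
    have "(y mod p)^2 mod p = y^2 mod p" by (simp add: power_mod)
    also have "\<dots> = r mod p" using y by (simp add: cong_def)
    also have "\<dots> = r" using r(1) by simp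
    finally have "?g (y mod p) = r" .
    moreover have "y mod p \<in> {0..<p}" using assms by simp
    ultimately show False using r(2) by blast
  qed
  show ?thesis using r nz nq unfolding Legendre_def by auto
qed



lemma form_nonres:
  fixes p :: nat and \<alpha> :: int
  assumes pp: "prime p" and p2: "p > 2" and na: "\<not> int p dvd \<alpha>"
  shows "\<exists>u v. Legendre (u^2 + \<alpha> * v^2) (int p) = -1"
proof (cases "Legendre \<alpha> (int p) = -1")
  case True
  then show ?thesis by (intro exI[of _ 0] exI[of _ 1]) simp
next
  case False
  have nz: "\<not> [\<alpha> = 0] (mod int p)" using na by (simp add: cong_0_iff)
  hence "QuadRes (int p) \<alpha>" using False unfolding Legendre_def by (auto split: if_splits)
  then obtain w where w: "[w^2 = \<alpha>] (mod int p)" unfolding QuadRes_def by blast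
  have ppi: "prime (int p)" using pp by simp
  obtain r where r: "0 \<le> r" "r < int p" "Legendre r (int p) = -1"
    using nonres_exists[OF ppi] p2 by auto
  define n where "n = (LEAST n::nat. Legendre (int n) (int p) = -1)"
  have ex: "Legendre (int (nat r)) (int p) = -1" using r by simp
  have n1: "Legendre (int n) (int p) = -1" unfolding n_def by (rule LeastI[where P="\<lambda>n. Legendre (int n) (int p) = -1", OF ex])
  have n2: "n \<le> nat r" unfolding n_def by (rule Least_le[where P="\<lambda>n. Legendre (int n) (int p) = -1", OF ex])
  have "n \<noteq> 0"
  proof
    assume "n = 0"
    hence "Legendre (int n) (int p) = 0" unfolding Legendre_def by simp
    thus False using n1 by simp
  qed
  moreover have "n \<noteq> 1" using n1 Legendre_one[of "int p"] p2 by auto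
  ultimately have n3: "n \<ge> 2" by simp
  have "Legendre (int (n - 1)) (int p) \<noteq> -1"
    unfolding n_def using not_less_Least[of "n - 1" "\<lambda>n. Legendre (int n) (int p) = -1"] n3 n_def by auto
  moreover have "\<not> [int (n - 1) = 0] (mod int p)"
  proof
    assume "[int (n - 1) = 0] (mod int p)"
    hence "int p dvd int (n - 1)" by (simp add: cong_0_iff)
    hence "p dvd (n - 1)" by simp
    moreover have "n - 1 < p" using n2 r by linarith
    moreover have "n - 1 > 0" using n3 by simp
    ultimately show False using nat_dvd_not_less by blast
  qed
  ultimately have "QuadRes (int p) (int (n - 1))" unfolding Legendre_def by (auto split: if_splits)
  then obtain s where s: "[s^2 = int (n - 1)] (mod int p)" unfolding QuadRes_def by blast
  have "\<not> int p dvd w"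
  proof
    assume "int p dvd w"
    hence "int p dvd w^2" by (simp add: power2_eq_square)
    hence "[w^2 = 0] (mod int p)" by (simp add: cong_0_iff)
    hence "[\<alpha> = 0] (mod int p)" using w by (meson cong_sym cong_trans)
    thus False using nz by simp
  qed
  hence "coprime w (int p)" using ppi prime_imp_coprime[of "int p" w]
    by (simp add: coprime_commute)
  then obtain v where v: "[w * v = 1] (mod int p)" using cong_solve_coprime_int by blast
  have "[\<alpha> * v^2 = w^2 * v^2] (mod int p)" using w by (simp add: cong_mult cong_sym)
  moreover have "w^2 * v^2 = (w * v)^2" by (simp add: power_mult_distrib)
  moreover have "[(w * v)^2 = 1^2] (mod int p)" using v by (rule cong_pow)
  ultimately have av: "[\<alpha> * v^2 = 1] (mod int p)" by (metis cong_trans one_power2)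
  have "[s^2 + \<alpha> * v^2 = int (n - 1) + 1] (mod int p)" using s av by (rule cong_add)
  moreover have "int (n - 1) + 1 = int n" using n3 by simp
  ultimately have "Legendre (s^2 + \<alpha> * v^2) (int p) = Legendre (int n) (int p)"
    using Legendre_cong by metis
  thus ?thesis using n1 by (intro exI[of _ s] exI[of _ v]) simp
qed



lemma window_sum:
  fixes h :: "int \<Rightarrow> real" and P :: int
  assumes P: "P > 0" and per: "\<And>t. h (t + P) = h t"
  shows "(\<Sum>t\<in>{a..<a+P}. h t) = (\<Sum>t\<in>{0..<P}. h t)"
proof -
  define g where "g a = (\<Sum>t\<in>{a..<a+P}. h t)" for a
  have step: "g (b + 1) = g b" for b
  proof -
    have e1: "{b..<b+P} = insert b {b+1..<b+P}" using P by auto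
    have e2: "{b+1..<b+1+P} = insert (b+P) {b+1..<b+P}" using P by auto
    have "g (b+1) = h (b+P) + (\<Sum>t\<in>{b+1..<b+P}. h t)"
      unfolding g_def e2 by (subst sum.insert) auto
    also have "\<dots> = h b + (\<Sum>t\<in>{b+1..<b+P}. h t)" using per[of b] by simp
    also have "\<dots> = g b" unfolding g_def e1 by (subst sum.insert) auto
    finally show ?thesis .
  qed
  have "g a = g 0"
  proof (induction a rule: int_induct[where k=0])
    case base then show ?case by simp
  next
    case (step1 i) then show ?case using step[of i] by simp
  next
    case (step2 i) then show ?case using step[of "i - 1"] by simp
  qed
  thus ?thesis unfolding g_def by simp
qed

lemma block_sum:
  fixes h :: "int \<Rightarrow> real" and P :: nat
  assumes P: "P > 0" and per: "\<And>t. h (t + int P) = h t"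
  shows "\<bar>(\<Sum>t\<in>{a..<a+int n}. h t) - real (n div P) * (\<Sum>t\<in>{0..<int P}. h t)\<bar>
           \<le> (\<Sum>t\<in>{0..<int P}. \<bar>h t\<bar>)"
proof (induction n arbitrary: a rule: less_induct)
  case (less n)
  show ?case
  proof (cases "n < P")
    case True
    hence "n div P = 0" by simp
    hence "\<bar>(\<Sum>t\<in>{a..<a+int n}. h t) - real (n div P) * (\<Sum>t\<in>{0..<int P}. h t)\<bar>
        = \<bar>\<Sum>t\<in>{a..<a+int n}. h t\<bar>" by simp
    also have "\<dots> \<le> (\<Sum>t\<in>{a..<a+int n}. \<bar>h t\<bar>)" by (rule sum_abs)
    also have "\<dots> \<le> (\<Sum>t\<in>{a..<a+int P}. \<bar>h t\<bar>)"
      by (rule sum_mono2) (use True in auto)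
    also have "\<dots> = (\<Sum>t\<in>{0..<int P}. \<bar>h t\<bar>)"
      by (rule window_sum) (use P per in auto)
    finally show ?thesis .
  next
    case False
    define m where "m = n - P"
    have nm: "n = m + P" using False m_def by simp
    have mlt: "m < n" using P nm by simp
    have split: "{a..<a+int n} = {a..<a+int P} \<union> {a+int P..<(a+int P)+int m}" using nm by auto
    have disj: "{a..<a+int P} \<inter> {a+int P..<(a+int P)+int m} = {}" by auto
    have "(\<Sum>t\<in>{a..<a+int n}. h t) = (\<Sum>t\<in>{a..<a+int P}. h t) + (\<Sum>t\<in>{a+int P..<(a+int P)+int m}. h t)"
      unfolding split by (rule sum.union_disjoint) (use disj in auto)
    also have "(\<Sum>t\<in>{a..<a+int P}. h t) = (\<Sum>t\<in>{0..<int P}. h t)"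
      by (rule window_sum) (use P per in auto)
    finally have e: "(\<Sum>t\<in>{a..<a+int n}. h t) = (\<Sum>t\<in>{0..<int P}. h t) + (\<Sum>t\<in>{a+int P..<(a+int P)+int m}. h t)" .
    have dv: "n div P = m div P + 1" using nm P by simp
    have IH: "\<bar>(\<Sum>t\<in>{a+int P..<(a+int P)+int m}. h t) - real (m div P) * (\<Sum>t\<in>{0..<int P}. h t)\<bar>
           \<le> (\<Sum>t\<in>{0..<int P}. \<bar>h t\<bar>)" using less.IH[OF mlt] by blast
    show ?thesis unfolding e dv using IH by (simp add: algebra_simps)
  qed
qed



lemma prod_primes_dvd_int:
  fixes D :: "nat set" and z :: int
  assumes "finite D" "\<forall>p\<in>D. prime p" "\<forall>p\<in>D. int p dvd z"
  shows "int (\<Prod>D) dvd z"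
  using assms
proof (induction D rule: finite_induct)
  case empty then show ?case by simp
next
  case (insert p D)
  have pp: "prime p" using insert by simp
  have "\<not> p dvd \<Prod>D"
  proof
    assume "p dvd \<Prod>D"
    then obtain q where q: "q \<in> D" "p dvd q" using prime_dvd_prod_iff[OF insert(1) pp, of id] by auto
    hence "p = q" using insert(4) pp primes_dvd_imp_eq by blast
    thus False using q insert(2) by simp
  qed
  hence "coprime p (\<Prod>D)" using pp prime_imp_coprime by blast
  hence c: "coprime (int p) (int (\<Prod>D))" by (simp only: coprime_int_iff)
  have "int p dvd z" "int (\<Prod>D) dvd z" using insert by auto
  hence "int p * int (\<Prod>D) dvd z" using c divides_mult by blast
  thus ?case using insert(1,2) by simp
qed

lemma roots_le2:
  fixes p :: nat and a :: int
  assumes pp: "prime p"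
  shows "card {r\<in>{0..<int p}. int p dvd r^2 + a} \<le> 2"
proof (cases "{r\<in>{0..<int p}. int p dvd r^2 + a} = {}")
  case True then show ?thesis by (simp only: True card.empty)
next
  case False
  then obtain r0 where r0: "r0 \<in> {0..<int p}" "int p dvd r0^2 + a" by blast
  have ppi: "prime (int p)" using pp by simp
  have "{r\<in>{0..<int p}. int p dvd r^2 + a} \<subseteq> {r0, (-r0) mod int p}"
  proof
    fix r assume r: "r \<in> {r\<in>{0..<int p}. int p dvd r^2 + a}"
    have "int p dvd (r^2 + a) - (r0^2 + a)" using r r0 by (intro dvd_diff) auto
    moreover have "(r^2 + a) - (r0^2 + a) = (r - r0) * (r + r0)" by (simp add: power2_eq_square algebra_simps)
    ultimately have "int p dvd (r - r0) * (r + r0)" by simp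
    hence "int p dvd (r - r0) \<or> int p dvd (r + r0)" using ppi prime_dvd_mult_iff by blast
    thus "r \<in> {r0, (-r0) mod int p}"
    proof
      assume "int p dvd (r - r0)"
      hence "r mod int p = r0 mod int p" by (simp add: mod_eq_dvd_iff)
      thus ?thesis using r r0 by simp
    next
      assume "int p dvd (r + r0)"
      hence "int p dvd (r - (-r0))" by simp
      hence "r mod int p = (-r0) mod int p" by (simp only: mod_eq_dvd_iff)
      thus ?thesis using r by simp
    qed
  qed
  hence "card {r\<in>{0..<int p}. int p dvd r^2 + a} \<le> card {r0, (-r0) mod int p}"
    by (rule card_mono[rotated]) simp
  also have "\<dots> \<le> 2" by (simp add: card_insert_if)
  finally show ?thesis .
qed

lemma count_bound:
  fixes D :: "nat set" and Q a :: int
  assumes fin: "finite D" and pr: "\<forall>p\<in>D. prime p" and Q: "Q > 0"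
  shows "card {x\<in>{0..<int (\<Prod>D) * Q}. \<forall>p\<in>D. int p dvd x^2 + a} \<le> nat Q * 2 ^ card D"
proof -
  define d where "d = int (\<Prod>D)"
  have dpos: "d > 0" unfolding d_def using pr fin
    by (metis of_nat_0_less_iff prime_gt_0_nat prod_pos)
  define R where "R p = {r\<in>{0..<int p}. int p dvd r^2 + a}" for p :: nat
  define S where "S = {x\<in>{0..<d * Q}. \<forall>p\<in>D. int p dvd x^2 + a}"
  define \<phi> where "\<phi> x = (x div d, restrict (\<lambda>p. x mod int p) D)" for x :: int
  have inj: "inj_on \<phi> S"
  proof (rule inj_onI)
    fix x y assume xy: "x \<in> S" "y \<in> S" "\<phi> x = \<phi> y"
    hence dv: "x div d = y div d" and rr: "restrict (\<lambda>p. x mod int p) D = restrict (\<lambda>p. y mod int p) D"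
      unfolding \<phi>_def by auto
    have "\<forall>p\<in>D. int p dvd x - y"
    proof
      fix p assume "p \<in> D"
      hence "x mod int p = y mod int p" using rr by (metis restrict_apply')
      thus "int p dvd x - y" by (simp add: mod_eq_dvd_iff)
    qed
    hence "d dvd x - y" unfolding d_def using prod_primes_dvd_int[OF fin pr] by blast
    hence "x mod d = y mod d" by (simp add: mod_eq_dvd_iff)
    hence "d * (x div d) + x mod d = d * (y div d) + y mod d" using dv by simp
    thus "x = y" by simp
  qed
  have sub: "\<phi> ` S \<subseteq> {0..<Q} \<times> PiE D R"
  proof
    fix z assume "z \<in> \<phi> ` S"
    then obtain x where x: "x \<in> S" "z = \<phi> x" by blast
    have x0: "0 \<le> x" "x < d * Q" and xd: "\<forall>p\<in>D. int p dvd x^2 + a" using x unfolding S_def by auto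
    have "0 \<le> x div d" using x0 dpos by (simp add: pos_imp_zdiv_nonneg_iff)
    moreover have "x div d < Q"
    proof (rule ccontr)
      assume "\<not> x div d < Q"
      hence "Q * d \<le> x div d * d" using dpos by (intro mult_right_mono) auto
      moreover have "x div d * d \<le> x" using pos_mod_sign[OF dpos, of x] div_mult_mod_eq[of x d] by linarith
      ultimately show False using x0 by (simp add: mult.commute)
    qed
    moreover have "restrict (\<lambda>p. x mod int p) D \<in> PiE D R"
    proof -
      have "x mod int p \<in> R p" if "p \<in> D" for p
      proof -
        have pp: "int p > 0" using pr that prime_gt_0_nat by simp
        have "[(x mod int p)^2 + a = x^2 + a] (mod int p)"
          by (intro cong_add cong_pow) (auto simp: cong_def)
        hence "int p dvd (x mod int p)^2 + a" using xd that by (simp add: cong_dvd_iff)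
        thus ?thesis unfolding R_def using pp by simp
      qed
      thus ?thesis by (simp add: restrict_PiE_iff)
    qed
    ultimately show "z \<in> {0..<Q} \<times> PiE D R" using x unfolding \<phi>_def by simp
  qed
  have "card S = card (\<phi> ` S)" using inj by (simp add: card_image)
  also have "\<dots> \<le> card ({0..<Q} \<times> PiE D R)"
  proof (rule card_mono[OF _ sub])
    have finR: "finite (R p)" for p unfolding R_def by (rule finite_subset[of _ "{0..<int p}"]) auto
    have "finite (PiE D R)" using fin finR by (intro finite_PiE) auto
    thus "finite ({0..<Q} \<times> PiE D R)" by simp
  qed
  also have "\<dots> = nat Q * (\<Prod>p\<in>D. card (R p))" by (simp add: card_cartesian_product card_PiE fin)
  also have "\<dots> \<le> nat Q * (\<Prod>p\<in>D. 2)"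
    by (intro mult_left_mono prod_mono) (use roots_le2 pr in \<open>auto simp: R_def\<close>)
  also have "\<dots> = nat Q * 2 ^ card D" by simp
  finally show ?thesis unfolding S_def d_def .
qed



lemma zero2d:
  fixes g :: "int \<Rightarrow> real" and M \<alpha> u v c :: int
  assumes M: "M > 0" and per: "\<And>a b. [a = b] (mod M) \<Longrightarrow> g a = g b"
    and c: "c = u^2 + \<alpha> * v^2" and cop: "coprime c M" and neg: "\<And>a. g (c * a) = - g a"
  shows "(\<Sum>y\<in>{0..<M}. \<Sum>z\<in>{0..<M}. g (y^2 + \<alpha> * z^2)) = 0"
proof -
  define A where "A = {0..<M} \<times> {0..<M}"
  define F where "F = (\<lambda>(y, z). g (y^2 + \<alpha> * z^2))"
  define T where "T = (\<lambda>(y::int, z::int). ((y * u - \<alpha> * z * v) mod M, (y * v + z * u) mod M))"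
  have finA: "finite A" unfolding A_def by simp
  have TA: "T ` A \<subseteq> A" unfolding A_def T_def using M by auto
  have injT: "inj_on T A"
  proof (rule inj_onI)
    fix p1 p2 assume p: "p1 \<in> A" "p2 \<in> A" "T p1 = T p2"
    obtain y z where p1: "p1 = (y, z)" by (cases p1)
    obtain y' z' where p2: "p2 = (y', z')" by (cases p2)
    have e1: "(y * u - \<alpha> * z * v) mod M = (y' * u - \<alpha> * z' * v) mod M"
      and e2: "(y * v + z * u) mod M = (y' * v + z' * u) mod M" using p(3) unfolding p1 p2 T_def by auto
    define a where "a = y - y'"
    define b where "b = z - z'"
    have d1: "M dvd a * u - \<alpha> * b * v" using e1 unfolding a_def b_def
      by (simp add: mod_eq_dvd_iff algebra_simps)
    have d2: "M dvd a * v + b * u" using e2 unfolding a_def b_def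
      by (simp add: mod_eq_dvd_iff algebra_simps)
    have "M dvd u * (a * u - \<alpha> * b * v) + \<alpha> * v * (a * v + b * u)" using d1 d2 by simp
    moreover have "u * (a * u - \<alpha> * b * v) + \<alpha> * v * (a * v + b * u) = c * a" unfolding c
      by (simp add: power2_eq_square algebra_simps)
    ultimately have "M dvd c * a" by simp
    hence ma: "M dvd a" using cop by (metis coprime_commute coprime_dvd_mult_right_iff)
    have "M dvd u * (a * v + b * u) - v * (a * u - \<alpha> * b * v)" using d1 d2 by simp
    moreover have "u * (a * v + b * u) - v * (a * u - \<alpha> * b * v) = c * b" unfolding c
      by (simp add: power2_eq_square algebra_simps)
    ultimately have "M dvd c * b" by simp
    hence mb: "M dvd b" using cop by (metis coprime_commute coprime_dvd_mult_right_iff)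
    have r: "0 \<le> y" "y < M" "0 \<le> y'" "y' < M" "0 \<le> z" "z < M" "0 \<le> z'" "z' < M"
      using p(1,2) unfolding p1 p2 A_def by auto
    have "y mod M = y' mod M" using ma unfolding a_def by (simp add: mod_eq_dvd_iff)
    hence "y = y'" using r by simp
    moreover have "z mod M = z' mod M" using mb unfolding b_def by (simp add: mod_eq_dvd_iff)
    hence "z = z'" using r by simp
    ultimately show "p1 = p2" unfolding p1 p2 by simp
  qed
  have TAeq: "T ` A = A" using endo_inj_surj[OF finA TA injT] .
  have FT: "F (T p) = - F p" for p
  proof -
    obtain y z where p: "p = (y, z)" by (cases p)
    have "[((y * u - \<alpha> * z * v) mod M)^2 + \<alpha> * ((y * v + z * u) mod M)^2 = (y * u - \<alpha> * z * v)^2 + \<alpha> * (y * v + z * u)^2] (mod M)"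
      by (intro cong_add cong_mult cong_pow cong_refl) (auto simp: cong_def)
    hence "F (T p) = g ((y * u - \<alpha> * z * v)^2 + \<alpha> * (y * v + z * u)^2)" unfolding F_def T_def p
      using per by simp
    also have "(y * u - \<alpha> * z * v)^2 + \<alpha> * (y * v + z * u)^2 = c * (y^2 + \<alpha> * z^2)" unfolding c
      by (simp add: power2_eq_square algebra_simps)
    also have "g (c * (y^2 + \<alpha> * z^2)) = - F p" unfolding F_def p using neg by simp
    finally show ?thesis .
  qed
  have "sum F A = sum F (T ` A)" using TAeq by simp
  also have "\<dots> = sum (F \<circ> T) A" by (rule sum.reindex[OF injT])
  also have "\<dots> = - sum F A" by (simp add: FT sum_negf)
  finally have "sum F A = 0" by simp
  moreover have "sum F A = (\<Sum>y\<in>{0..<M}. \<Sum>z\<in>{0..<M}. g (y^2 + \<alpha> * z^2))"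
    unfolding A_def F_def by (simp add: sum.cartesian_product)
  ultimately show ?thesis by simp
qed



lemma prime_not_dvd_prod:
  fixes p :: nat and S :: "nat set"
  assumes "prime p" "finite S" "\<forall>q\<in>S. prime q" "p \<notin> S"
  shows "\<not> p dvd \<Prod>S"
proof
  assume "p dvd \<Prod>S"
  then obtain q where q: "q \<in> S" "p dvd q" using prime_dvd_prod_iff[OF assms(2) assms(1), of id] by auto
  hence "p = q" using assms primes_dvd_imp_eq by blast
  thus False using q assms by simp
qed

lemma exists_twist:
  fixes P1 D :: "nat set" and \<alpha> :: int
  assumes fP1: "finite P1" and ne: "P1 \<noteq> {}"
    and hP1: "\<forall>p\<in>P1. prime p \<and> p > 2 \<and> \<not> int p dvd \<alpha>"
    and fD: "finite D" and hD: "\<forall>p\<in>D. prime p" and disj: "P1 \<inter> D = {}"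
  shows "\<exists>u v. (\<Prod>p\<in>P1. Legendre (u^2 + \<alpha> * v^2) (int p)) = -1
     \<and> (\<forall>p\<in>D. \<not> int p dvd (u^2 + \<alpha> * v^2))
     \<and> coprime (u^2 + \<alpha> * v^2) (int (\<Prod>D) * int (\<Prod>P1))"
proof -
  obtain p where p: "p \<in> P1" using ne by blast
  have pp: "prime p" "p > 2" "\<not> int p dvd \<alpha>" using hP1 p by auto
  define m where "m = int (\<Prod>D) * int (\<Prod>(P1 - {p}))"
  have n1: "\<not> p dvd \<Prod>D" using prime_not_dvd_prod[OF pp(1) fD] hD disj p by blast
  have n2: "\<not> p dvd \<Prod>(P1 - {p})" using prime_not_dvd_prod[OF pp(1)] fP1 hP1 by blast
  have "coprime p (\<Prod>D)" using n1 pp prime_imp_coprime by blast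
  moreover have "coprime p (\<Prod>(P1 - {p}))" using n2 pp prime_imp_coprime by blast
  ultimately have cpm: "coprime (int p) m" unfolding m_def
    by (simp only: coprime_mult_right_iff coprime_int_iff)
  obtain u0 v0 where uv0: "Legendre (u0^2 + \<alpha> * v0^2) (int p) = -1" using form_nonres[OF pp] by blast
  obtain u where u: "[u = u0] (mod int p)" "[u = 1] (mod m)"
    using binary_chinese_remainder_int[OF cpm] by blast
  obtain v where v: "[v = v0] (mod int p)" "[v = 0] (mod m)"
    using binary_chinese_remainder_int[OF cpm] by blast
  define c where "c = u^2 + \<alpha> * v^2"
  have cp: "[c = u0^2 + \<alpha> * v0^2] (mod int p)" unfolding c_def
    by (intro cong_add cong_mult cong_pow cong_refl u v)
  have cm: "[c = 1] (mod m)"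
  proof -
    have "[c = 1^2 + \<alpha> * 0^2] (mod m)" unfolding c_def
      by (intro cong_add cong_mult cong_pow cong_refl u v)
    thus ?thesis by simp
  qed
  have Lp: "Legendre c (int p) = -1" using cp uv0 Legendre_cong by metis
  have Lo: "Legendre c (int q) = 1" if q: "q \<in> P1 - {p}" for q
  proof -
    have "q dvd \<Prod>(P1 - {p})" using dvd_prodI[of "P1 - {p}" q "\<lambda>x. x"] fP1 q by simp
    hence "int q dvd int (\<Prod>(P1 - {p}))" by (simp only: of_nat_dvd_iff)
    hence "int q dvd m" unfolding m_def by (rule dvd_mult)
    hence "[c = 1] (mod int q)" using cm cong_dvd_modulus by blast
    moreover have "int q > 1" using hP1 q by auto
    ultimately show ?thesis using Legendre_cong Legendre_one by metis
  qed
  have "(\<Prod>q\<in>P1. Legendre c (int q)) = Legendre c (int p) * (\<Prod>q\<in>P1 - {p}. Legendre c (int q))"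
    using prod.remove[OF fP1 p] by blast
  also have "(\<Prod>q\<in>P1 - {p}. Legendre c (int q)) = 1" using Lo by simp
  finally have chi: "(\<Prod>q\<in>P1. Legendre c (int q)) = -1" using Lp by simp
  have nD: "\<not> int q dvd c" if q: "q \<in> D" for q
  proof
    assume qc: "int q dvd c"
    have "q dvd \<Prod>D" using dvd_prodI[of D q "\<lambda>x. x"] fD q by simp
    hence "int q dvd int (\<Prod>D)" by (simp only: of_nat_dvd_iff)
    hence "int q dvd m" unfolding m_def by (rule dvd_mult2)
    hence "[c = 1] (mod int q)" using cm cong_dvd_modulus by blast
    hence "int q dvd 1" using qc by (meson cong_dvd_iff)
    hence "q = 1" by simp
    moreover have "prime q" using hD q by blast
    ultimately show False by simp
  qed
  have cop1: "coprime c (int p)"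
  proof -
    have "\<not> int p dvd c"
    proof
      assume "int p dvd c"
      hence "[c = 0] (mod int p)" by (simp add: cong_0_iff)
      thus False using Lp unfolding Legendre_def by simp
    qed
    thus ?thesis using pp prime_imp_coprime[of "int p" c] by (simp add: coprime_commute)
  qed
  have cop2: "coprime c m" using cm cong_imp_coprime cong_sym by (metis coprime_1_left)
  have "int (\<Prod>D) * int (\<Prod>P1) = int p * m"
    unfolding m_def using prod.remove[OF fP1 p, of id] by simp
  hence "coprime c (int (\<Prod>D) * int (\<Prod>P1))" using cop1 cop2 by simp
  thus ?thesis using chi nD unfolding c_def by blast
qed



lemma TD_bound:
  fixes P1 D :: "nat set" and \<alpha> :: int and N :: nat
  assumes fP1: "finite P1" and ne: "P1 \<noteq> {}"
    and hP1: "\<forall>p\<in>P1. prime p \<and> p > 2 \<and> \<not> int p dvd \<alpha>"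
    and fD: "finite D" and hD: "\<forall>p\<in>D. prime p" and disj: "P1 \<inter> D = {}"
  defines "g \<equiv> (\<lambda>a::int. if \<forall>p\<in>D. int p dvd a then real_of_int (\<Prod>p\<in>P1. Legendre a (int p)) else 0)"
  shows "\<bar>\<Sum>x2\<in>{-int N..int N}. \<Sum>x1\<in>{-int N..int N}. g (x1^2 + \<alpha> * x2^2)\<bar>
           \<le> 2 * (2 * real N + 1) * (real (\<Prod>P1) * 2 ^ card D)"
proof -
  define Q where "Q = int (\<Prod>P1)"
  have Qpos: "Q > 0" unfolding Q_def using fP1 hP1
    by (metis of_nat_0_less_iff prime_gt_0_nat prod_pos)
  have dpos: "int (\<Prod>D) > 0" using fD hD
    by (metis of_nat_0_less_iff prime_gt_0_nat prod_pos)
  define M where "M = int (\<Prod>D) * Q"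
  have Mpos: "M > 0" unfolding M_def using Qpos dpos by simp
  define Mn where "Mn = nat M"
  have Mn: "int Mn = M" "Mn > 0" unfolding Mn_def using Mpos by auto
  define K where "K = (2 * N + 1) div Mn"
  define B where "B = real (\<Prod>P1) * 2 ^ card D"
  have B0: "B \<ge> 0" unfolding B_def by (intro mult_nonneg_nonneg of_nat_0_le_iff) simp
  define W where "W = {-int N..int N}"
  have W: "W = {-int N..<-int N + int (2 * N + 1)}" unfolding W_def by auto
  have cardW: "card W = 2 * N + 1" unfolding W_def by simp
  have per: "g a = g b" if ab: "[a = b] (mod M)" for a b
  proof -
    have "int p dvd a \<longleftrightarrow> int p dvd b" if p: "p \<in> D" for p
    proof -
      have "q dvd \<Prod>D" if "q \<in> D" for q using dvd_prodI[of D q "\<lambda>x. x"] fD that by simp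
      hence "int p dvd M" unfolding M_def using p by (simp only: of_nat_dvd_iff dvd_mult2)
      hence "[a = b] (mod int p)" using ab cong_dvd_modulus by blast
      thus ?thesis using cong_dvd_iff by blast
    qed
    moreover have "Legendre a (int p) = Legendre b (int p)" if p: "p \<in> P1" for p
    proof -
      have "p dvd \<Prod>P1" using dvd_prodI[of P1 p "\<lambda>x. x"] fP1 p by simp
      hence "int p dvd M" unfolding M_def Q_def by (simp only: of_nat_dvd_iff dvd_mult)
      hence "[a = b] (mod int p)" using ab cong_dvd_modulus by blast
      thus ?thesis using Legendre_cong by blast
    qed
    ultimately show ?thesis unfolding g_def by (simp cong: prod.cong)
  qed
  have gabs: "\<bar>g a\<bar> \<le> (if \<forall>p\<in>D. int p dvd a then 1 else 0)" for a
  proof -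
    have "\<bar>real_of_int (\<Prod>p\<in>P1. Legendre a (int p))\<bar> = \<bar>\<Prod>p\<in>P1. real_of_int (Legendre a (int p))\<bar>"
      by simp
    also have "\<dots> = (\<Prod>p\<in>P1. \<bar>real_of_int (Legendre a (int p))\<bar>)" by (rule abs_prod)
    also have "\<dots> \<le> 1"
    proof (rule prod_le_1)
      fix p assume "p \<in> P1"
      have "\<bar>Legendre a (int p)\<bar> \<le> 1" by (rule Legendre_abs)
      thus "0 \<le> \<bar>real_of_int (Legendre a (int p))\<bar> \<and> \<bar>real_of_int (Legendre a (int p))\<bar> \<le> 1"
        by linarith
    qed
    finally have "\<bar>real_of_int (\<Prod>p\<in>P1. Legendre a (int p))\<bar> \<le> 1" .
    thus ?thesis unfolding g_def by auto
  qed
  define h where "h x2 x1 = g (x1^2 + \<alpha> * x2^2)" for x2 x1 :: int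
  have hper1: "h x2 (t + int Mn) = h x2 t" for x2 t
  proof -
    have "[(t + M)^2 + \<alpha> * x2^2 = t^2 + \<alpha> * x2^2] (mod M)"
      by (intro cong_add cong_pow cong_refl) (simp add: cong_def)
    thus ?thesis unfolding h_def Mn using per by blast
  qed
  have hper2: "h (t + int Mn) x1 = h t x1" for x1 t
  proof -
    have "[x1^2 + \<alpha> * (t + M)^2 = x1^2 + \<alpha> * t^2] (mod M)"
      by (intro cong_add cong_mult cong_pow cong_refl) (simp add: cong_def)
    thus ?thesis unfolding h_def Mn using per by blast
  qed
  define A where "A x2 = (\<Sum>x1\<in>{0..<M}. \<bar>h x2 x1\<bar>)" for x2
  have Abound: "A x2 \<le> B" for x2
  proof -
    let ?P = "\<lambda>x1. \<forall>p\<in>D. int p dvd x1^2 + \<alpha> * x2^2"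
    have "A x2 \<le> (\<Sum>x1\<in>{0..<M}. if ?P x1 then 1 else 0)"
      unfolding A_def h_def by (intro sum_mono) (rule gabs)
    also have "\<dots> = (\<Sum>x1\<in>{x1\<in>{0..<M}. ?P x1}. 1)"
      by (rule sum.inter_filter[symmetric]) simp
    also have "\<dots> = real (card {x1\<in>{0..<M}. ?P x1})" by simp
    also have "card {x1\<in>{0..<M}. ?P x1} \<le> nat Q * 2 ^ card D"
      unfolding M_def by (rule count_bound[OF fD hD Qpos])
    hence "real (card {x1\<in>{0..<M}. ?P x1}) \<le> real (nat Q * 2 ^ card D)" by (simp only: of_nat_le_iff)
    also have "real (nat Q * 2 ^ card D) = B" unfolding B_def Q_def nat_int by simp
    finally show ?thesis .
  qed
  define S where "S x2 = (\<Sum>x1\<in>{0..<M}. h x2 x1)" for x2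
  have step1: "\<bar>(\<Sum>x1\<in>W. h x2 x1) - real K * S x2\<bar> \<le> A x2" for x2
    using block_sum[of Mn "h x2" "-int N" "2 * N + 1", OF Mn(2) hper1]
    unfolding W K_def S_def A_def Mn(1) by simp
  have Sper: "S (t + int Mn) = S t" for t unfolding S_def using hper2 by simp
  have step2: "\<bar>(\<Sum>x2\<in>W. S x2) - real K * (\<Sum>x2\<in>{0..<M}. S x2)\<bar> \<le> (\<Sum>x2\<in>{0..<M}. \<bar>S x2\<bar>)"
    using block_sum[of Mn S "-int N" "2 * N + 1", OF Mn(2) Sper]
    unfolding W K_def Mn(1) by simp
  obtain u v where uv: "(\<Prod>p\<in>P1. Legendre (u^2 + \<alpha> * v^2) (int p)) = -1"
      "\<forall>p\<in>D. \<not> int p dvd (u^2 + \<alpha> * v^2)"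
      "coprime (u^2 + \<alpha> * v^2) (int (\<Prod>D) * int (\<Prod>P1))"
    using exists_twist[OF fP1 ne hP1 fD hD disj] by blast
  define c where "c = u^2 + \<alpha> * v^2"
  have neg: "g (c * a) = - g a" for a
  proof -
    have "(\<forall>p\<in>D. int p dvd c * a) \<longleftrightarrow> (\<forall>p\<in>D. int p dvd a)"
    proof -
      have "int p dvd c * a \<longleftrightarrow> int p dvd a" if p: "p \<in> D" for p
      proof -
        have "prime (int p)" using hD p by simp
        thus ?thesis using uv(2) p unfolding c_def by (simp add: prime_dvd_mult_iff)
      qed
      thus ?thesis by blast
    qed
    moreover have "(\<Prod>p\<in>P1. Legendre (c * a) (int p)) = - (\<Prod>p\<in>P1. Legendre a (int p))"
    proof -
      have "(\<Prod>p\<in>P1. Legendre (c * a) (int p)) = (\<Prod>p\<in>P1. Legendre c (int p) * Legendre a (int p))"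
        using hP1 Legendre_mult by (intro prod.cong) auto
      also have "\<dots> = (\<Prod>p\<in>P1. Legendre c (int p)) * (\<Prod>p\<in>P1. Legendre a (int p))"
        by (rule prod.distrib)
      finally show ?thesis using uv(1) unfolding c_def by simp
    qed
    ultimately show ?thesis unfolding g_def by simp
  qed
  have zero: "(\<Sum>x2\<in>{0..<M}. S x2) = 0"
  proof -
    have "(\<Sum>x2\<in>{0..<M}. S x2) = (\<Sum>x1\<in>{0..<M}. \<Sum>x2\<in>{0..<M}. g (x1^2 + \<alpha> * x2^2))"
      unfolding S_def h_def by (rule sum.swap)
    also have "\<dots> = 0"
    proof -
      have cM: "coprime c M" using uv(3) unfolding c_def M_def Q_def by simp
      show ?thesis using zero2d[of M g c u \<alpha> v, OF Mpos per c_def cM neg] by simp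
    qed
    finally show ?thesis .
  qed
  have sumabsS: "(\<Sum>x2\<in>{0..<M}. \<bar>S x2\<bar>) \<le> real Mn * B"
  proof -
    have "(\<Sum>x2\<in>{0..<M}. \<bar>S x2\<bar>) \<le> (\<Sum>x2\<in>{0..<M}. A x2)"
      unfolding S_def A_def by (intro sum_mono sum_abs)
    also have "\<dots> \<le> (\<Sum>x2\<in>{0..<M}. B)" by (intro sum_mono Abound)
    also have "\<dots> = real Mn * B" using Mn by simp
    finally show ?thesis .
  qed
  have KM: "real K * real Mn \<le> 2 * real N + 1"
  proof -
    have "K * Mn \<le> 2 * N + 1" unfolding K_def by (rule div_times_less_eq_dividend)
    hence "real (K * Mn) \<le> real (2 * N + 1)" by (simp only: of_nat_le_iff)
    thus ?thesis by simp
  qed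
  have T1: "\<bar>real K * (\<Sum>x2\<in>W. S x2)\<bar> \<le> (2 * real N + 1) * B"
  proof -
    have "\<bar>\<Sum>x2\<in>W. S x2\<bar> \<le> real Mn * B" using step2 zero sumabsS by simp
    hence "\<bar>real K * (\<Sum>x2\<in>W. S x2)\<bar> \<le> real K * (real Mn * B)"
      by (simp add: abs_mult mult_left_mono)
    also have "\<dots> = (real K * real Mn) * B" by simp
    also have "\<dots> \<le> (2 * real N + 1) * B" using KM B0 by (rule mult_right_mono)
    finally show ?thesis .
  qed
  have T2: "\<bar>\<Sum>x2\<in>W. ((\<Sum>x1\<in>W. h x2 x1) - real K * S x2)\<bar> \<le> (2 * real N + 1) * B"
  proof -
    have "\<bar>\<Sum>x2\<in>W. ((\<Sum>x1\<in>W. h x2 x1) - real K * S x2)\<bar> \<le> (\<Sum>x2\<in>W. \<bar>(\<Sum>x1\<in>W. h x2 x1) - real K * S x2\<bar>)"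
      by (rule sum_abs)
    also have "\<dots> \<le> (\<Sum>x2\<in>W. B)" using step1 Abound by (intro sum_mono) (meson order_trans)
    also have "\<dots> = (2 * real N + 1) * B" using cardW by simp
    finally show ?thesis .
  qed
  have "(\<Sum>x2\<in>W. \<Sum>x1\<in>W. h x2 x1) = real K * (\<Sum>x2\<in>W. S x2) + (\<Sum>x2\<in>W. ((\<Sum>x1\<in>W. h x2 x1) - real K * S x2))"
    by (simp add: sum_distrib_left sum_subtractf)
  hence "\<bar>\<Sum>x2\<in>W. \<Sum>x1\<in>W. h x2 x1\<bar> \<le> 2 * ((2 * real N + 1) * B)"
    using T1 T2 by linarith
  thus ?thesis unfolding W_def h_def B_def by (simp only: mult.assoc)
qed



lemma prod_ind:
  fixes D :: "'a set" and P :: "'a \<Rightarrow> bool"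
  assumes "finite D"
  shows "(\<Prod>p\<in>D. if P p then 1 else 0 :: real) = (if \<forall>p\<in>D. P p then 1 else 0)"
proof (cases "\<forall>p\<in>D. P p")
  case True then show ?thesis by simp
next
  case False
  then obtain p where "p \<in> D" "\<not> P p" by blast
  then show ?thesis using assms False by (subst prod_zero) auto
qed

lemma incl_excl:
  fixes P2 :: "nat set" and a :: int and x :: real
  assumes fP2: "finite P2"
  shows "(if \<forall>p\<in>P2. \<not> int p dvd a then x else 0)
       = (\<Sum>D\<in>Pow P2. (-1) ^ card D * (if \<forall>p\<in>D. int p dvd a then x else 0))"
proof -
  have Dl: "(\<Prod>p\<in>D. - (if int p dvd a then 1 else 0 :: real))
      = (-1) ^ card D * (if \<forall>p\<in>D. int p dvd a then 1 else 0)" if "D \<in> Pow P2" for D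
  proof -
    have fD: "finite D" using that fP2 finite_subset by auto
    have "(\<Prod>p\<in>D. - (if int p dvd a then 1 else 0 :: real))
        = (\<Prod>p\<in>D. (-1) * (if int p dvd a then 1 else 0 :: real))" by simp
    also have "\<dots> = (\<Prod>p\<in>D. (-1::real)) * (\<Prod>p\<in>D. if int p dvd a then 1 else 0 :: real)"
      by (rule prod.distrib)
    also have "\<dots> = (-1) ^ card D * (if \<forall>p\<in>D. int p dvd a then 1 else 0)"
      using prod_ind[OF fD] by simp
    finally show ?thesis .
  qed
  have "(if \<forall>p\<in>P2. \<not> int p dvd a then 1 else 0 :: real) = (\<Prod>p\<in>P2. if \<not> int p dvd a then 1 else 0)"
    by (rule prod_ind[OF fP2, symmetric])
  also have "\<dots> = (\<Prod>p\<in>P2. (- (if int p dvd a then 1 else 0)) + (1::real))"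
    by (intro prod.cong) auto
  also have "\<dots> = (\<Sum>D\<in>Pow P2. (\<Prod>p\<in>D. - (if int p dvd a then 1 else 0)) * (\<Prod>p\<in>P2 - D. (1::real)))"
    by (rule prod_add[OF fP2])
  also have "\<dots> = (\<Sum>D\<in>Pow P2. (-1) ^ card D * (if \<forall>p\<in>D. int p dvd a then 1 else 0))"
    by (intro sum.cong refl) (simp add: Dl)
  finally have key: "(if \<forall>p\<in>P2. \<not> int p dvd a then 1 else 0 :: real)
      = (\<Sum>D\<in>Pow P2. (-1) ^ card D * (if \<forall>p\<in>D. int p dvd a then 1 else 0))" .
  have "(if \<forall>p\<in>P2. \<not> int p dvd a then x else 0) = (if \<forall>p\<in>P2. \<not> int p dvd a then 1 else 0 :: real) * x"
    by simp
  also have "\<dots> = (\<Sum>D\<in>Pow P2. (-1) ^ card D * (if \<forall>p\<in>D. int p dvd a then 1 else 0)) * x"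
    using key by simp
  also have "\<dots> = (\<Sum>D\<in>Pow P2. (-1) ^ card D * (if \<forall>p\<in>D. int p dvd a then x else 0))"
    by (simp add: sum_distrib_right) (intro sum.cong refl, auto)
  finally show ?thesis .
qed



lemma Lsum_bound:
  fixes P1 P2 :: "nat set" and \<alpha> :: int and N q1 q2 :: nat
  assumes fP1: "finite P1" and ne: "P1 \<noteq> {}"
    and hP1: "\<forall>p\<in>P1. prime p \<and> p > 2 \<and> \<not> int p dvd \<alpha>"
    and fP2: "finite P2" and hP2: "\<forall>p\<in>P2. prime p" and disj: "P1 \<inter> P2 = {}"
    and Jac: "\<And>a. Jacobi a q1 = (\<Prod>p\<in>P1. Legendre a (int p))"
    and cop: "\<And>a. coprime a (int q2) \<longleftrightarrow> (\<forall>p\<in>P2. \<not> int p dvd a)"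
  shows "\<bar>real_of_int (Lsum \<alpha> q1 q2 N)\<bar> \<le> 2 * (2 * real N + 1) * (real (\<Prod>P1) * 4 ^ card P2)"
proof -
  define W where "W = {-int N..int N}"
  define chi where "chi a = real_of_int (\<Prod>p\<in>P1. Legendre a (int p))" for a
  define gD where "gD D a = (if \<forall>p\<in>D. int p dvd a then chi a else 0)" for D :: "nat set" and a
  define G where "G a = (if \<forall>p\<in>P2. \<not> int p dvd a then chi a else 0)" for a
  have fin: "finite W" unfolding W_def by simp
  have set_eq: "{(x1, x2). x1 \<in> W \<and> x2 \<in> W \<and> coprime (x1^2 + \<alpha> * x2^2) (int q2)}
      = {x \<in> W \<times> W. coprime (fst x ^ 2 + \<alpha> * snd x ^ 2) (int q2)}" by auto
  have "real_of_int (Lsum \<alpha> q1 q2 N)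
      = (\<Sum>x\<in>{x \<in> W \<times> W. coprime (fst x ^ 2 + \<alpha> * snd x ^ 2) (int q2)}.
           real_of_int (Jacobi (fst x ^ 2 + \<alpha> * snd x ^ 2) q1))"
    unfolding Lsum_def W_def[symmetric] set_eq of_int_sum by (intro sum.cong refl) auto
  also have "\<dots> = (\<Sum>x\<in>W \<times> W. if coprime (fst x ^ 2 + \<alpha> * snd x ^ 2) (int q2)
           then real_of_int (Jacobi (fst x ^ 2 + \<alpha> * snd x ^ 2) q1) else 0)"
    by (rule sum.inter_filter) (simp add: fin)
  also have "\<dots> = (\<Sum>x\<in>W \<times> W. G (fst x ^ 2 + \<alpha> * snd x ^ 2))"
    unfolding G_def chi_def by (intro sum.cong refl) (simp add: cop Jac)
  also have "\<dots> = (\<Sum>x1\<in>W. \<Sum>x2\<in>W. G (x1^2 + \<alpha> * x2^2))"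
    by (simp add: sum.cartesian_product split_beta)
  also have "\<dots> = (\<Sum>x2\<in>W. \<Sum>x1\<in>W. G (x1^2 + \<alpha> * x2^2))" by (rule sum.swap)
  also have "\<dots> = (\<Sum>x2\<in>W. \<Sum>x1\<in>W. \<Sum>D\<in>Pow P2. (-1) ^ card D * gD D (x1^2 + \<alpha> * x2^2))"
    unfolding G_def gD_def by (intro sum.cong refl incl_excl[OF fP2])
  also have "\<dots> = (\<Sum>x2\<in>W. \<Sum>D\<in>Pow P2. \<Sum>x1\<in>W. (-1) ^ card D * gD D (x1^2 + \<alpha> * x2^2))"
    by (intro sum.cong refl sum.swap)
  also have "\<dots> = (\<Sum>D\<in>Pow P2. \<Sum>x2\<in>W. \<Sum>x1\<in>W. (-1) ^ card D * gD D (x1^2 + \<alpha> * x2^2))"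
    by (rule sum.swap)
  also have "\<dots> = (\<Sum>D\<in>Pow P2. (-1) ^ card D * (\<Sum>x2\<in>W. \<Sum>x1\<in>W. gD D (x1^2 + \<alpha> * x2^2)))"
    by (simp add: sum_distrib_left)
  finally have eq: "real_of_int (Lsum \<alpha> q1 q2 N)
      = (\<Sum>D\<in>Pow P2. (-1) ^ card D * (\<Sum>x2\<in>W. \<Sum>x1\<in>W. gD D (x1^2 + \<alpha> * x2^2)))" .
  define bnd where "bnd = 2 * (2 * real N + 1) * (real (\<Prod>P1) * 2 ^ card P2)"
  have Tb: "\<bar>(-1) ^ card D * (\<Sum>x2\<in>W. \<Sum>x1\<in>W. gD D (x1^2 + \<alpha> * x2^2))\<bar> \<le> bnd"
    if D: "D \<in> Pow P2" for D
  proof -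
    have fD: "finite D" using D fP2 finite_subset by auto
    have hD: "\<forall>p\<in>D. prime p" using D hP2 by auto
    have dj: "P1 \<inter> D = {}" using D disj by auto
    have "\<bar>(-1) ^ card D * (\<Sum>x2\<in>W. \<Sum>x1\<in>W. gD D (x1^2 + \<alpha> * x2^2))\<bar>
        = \<bar>\<Sum>x2\<in>W. \<Sum>x1\<in>W. gD D (x1^2 + \<alpha> * x2^2)\<bar>" by (simp add: abs_mult)
    also have "\<dots> \<le> 2 * (2 * real N + 1) * (real (\<Prod>P1) * 2 ^ card D)"
      using TD_bound[OF fP1 ne hP1 fD hD dj, of N] unfolding W_def gD_def chi_def by simp
    also have "\<dots> \<le> bnd" unfolding bnd_def
    proof -
      have "card D \<le> card P2" using D fP2 by (simp add: card_mono)
      hence "(2::real) ^ card D \<le> 2 ^ card P2" by (intro power_increasing) auto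
      moreover have "0 \<le> real (\<Prod>P1)" by (rule of_nat_0_le_iff)
      ultimately have "real (\<Prod>P1) * 2 ^ card D \<le> real (\<Prod>P1) * 2 ^ card P2" by (rule mult_left_mono)
      thus "2 * (2 * real N + 1) * (real (\<Prod>P1) * 2 ^ card D) \<le> 2 * (2 * real N + 1) * (real (\<Prod>P1) * 2 ^ card P2)"
        by (rule mult_left_mono) simp
    qed
    finally show ?thesis .
  qed
  have "\<bar>real_of_int (Lsum \<alpha> q1 q2 N)\<bar> \<le> (\<Sum>D\<in>Pow P2. \<bar>(-1) ^ card D * (\<Sum>x2\<in>W. \<Sum>x1\<in>W. gD D (x1^2 + \<alpha> * x2^2))\<bar>)"
    unfolding eq by (rule sum_abs)
  also have "\<dots> \<le> (\<Sum>D\<in>Pow P2. bnd)" by (intro sum_mono Tb)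
  also have "\<dots> = 2 ^ card P2 * bnd" using fP2 by (simp add: card_Pow)
  also have "\<dots> = 2 * (2 * real N + 1) * (real (\<Prod>P1) * 4 ^ card P2)"
    unfolding bnd_def by (simp add: power_mult_distrib[symmetric] algebra_simps)
  finally show ?thesis .
qed



lemma omega_bound:
  fixes \<epsilon> :: real
  assumes e: "\<epsilon> > 0"
  shows "\<exists>C>0. \<forall>q::nat. q > 0 \<longrightarrow> (4::real) ^ card (prime_factors q) \<le> C * real q powr \<epsilon>"
proof -
  define B where "B = nat \<lceil>4 powr (1 / \<epsilon>)\<rceil>"
  have B: "4 powr (1 / \<epsilon>) \<le> real B" unfolding B_def by linarith
  show ?thesis
  proof (intro exI[of _ "(4::real) ^ B"] conjI allI impI)
    show "(0::real) < 4 ^ B" by simp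
    fix q :: nat assume q: "q > 0"
    define PF where "PF = prime_factors q"
    define S where "S = {p\<in>PF. p < B}"
    define T where "T = PF - S"
    have fPF: "finite PF" unfolding PF_def by simp
    have ST: "PF = S \<union> T" "S \<inter> T = {}" unfolding S_def T_def by auto
    have fS: "finite S" "finite T" using fPF ST by auto
    have e1: "(4::real) ^ card PF = (\<Prod>p\<in>S. 4) * (\<Prod>p\<in>T. (4::real))"
    proof -
      have "(4::real) ^ card PF = (\<Prod>p\<in>PF. 4)" by simp
      also have "\<dots> = (\<Prod>p\<in>S. 4) * (\<Prod>p\<in>T. (4::real))"
        unfolding ST(1) by (rule prod.union_disjoint[OF fS ST(2)])
      finally show ?thesis .
    qed
    have e2: "(\<Prod>p\<in>S. (4::real)) \<le> 4 ^ B"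
    proof -
      have "card S \<le> card {..<B}" by (rule card_mono) (auto simp: S_def)
      hence "card S \<le> B" by simp
      thus ?thesis by (simp add: power_increasing)
    qed
    have e3: "(\<Prod>p\<in>T. (4::real)) \<le> (\<Prod>p\<in>T. real p powr \<epsilon>)"
    proof (rule prod_mono)
      fix p assume p: "p \<in> T"
      hence "real B \<le> real p" unfolding T_def S_def by auto
      hence "4 powr (1 / \<epsilon>) \<le> real p" using B by linarith
      hence "(4 powr (1 / \<epsilon>)) powr \<epsilon> \<le> real p powr \<epsilon>"
        using e by (intro powr_mono2) auto
      moreover have "(4 powr (1 / \<epsilon>)) powr \<epsilon> = 4" using e by (simp add: powr_powr)
      ultimately show "0 \<le> (4::real) \<and> 4 \<le> real p powr \<epsilon>" by simp
    qed
    have X: "(\<Prod>p\<in>T. real p powr \<epsilon>) \<le> real q powr \<epsilon>"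
    proof -
    have "(\<Prod>p\<in>T. real p powr \<epsilon>) \<le> (\<Prod>p\<in>PF. real p powr \<epsilon>)"
    proof -
      have "(\<Prod>p\<in>PF. real p powr \<epsilon>) = (\<Prod>p\<in>S. real p powr \<epsilon>) * (\<Prod>p\<in>T. real p powr \<epsilon>)"
        unfolding ST(1) by (rule prod.union_disjoint[OF fS ST(2)])
      moreover have "1 \<le> (\<Prod>p\<in>S. real p powr \<epsilon>)"
      proof (rule prod_ge_1)
        fix p assume "p \<in> S"
        hence "prime p" unfolding S_def PF_def by auto
        hence "1 \<le> real p" using prime_ge_1_nat by simp
        thus "1 \<le> real p powr \<epsilon>" using e by (simp add: ge_one_powr_ge_zero)
      qed
      moreover have "0 \<le> (\<Prod>p\<in>T. real p powr \<epsilon>)" by (simp add: prod_nonneg)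
      ultimately show ?thesis using mult_right_mono[of 1 "\<Prod>p\<in>S. real p powr \<epsilon>" "\<Prod>p\<in>T. real p powr \<epsilon>"] by simp
    qed
    also have "(\<Prod>p\<in>PF. real p powr \<epsilon>) = (\<Prod>p\<in>PF. real p) powr \<epsilon>"
      by (rule prod_powr_distrib[symmetric])
    also have "\<dots> \<le> real q powr \<epsilon>"
    proof (rule powr_mono2)
      have "(\<Prod>p\<in>PF. p) \<le> (\<Prod>p\<in>PF. p ^ multiplicity p q)"
      proof (rule prod_mono)
        fix p assume "p \<in> PF"
        hence "prime p" "multiplicity p q > 0" unfolding PF_def by (auto simp: prime_factors_multiplicity)
        hence "p ^ 1 \<le> p ^ multiplicity p q"
          using prime_ge_1_nat by (intro power_increasing) auto
        thus "0 \<le> p \<and> p \<le> p ^ multiplicity p q" by simp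
      qed
      also have "\<dots> = q" unfolding PF_def using prod_prime_factors[of q] q by simp
      finally have "(\<Prod>p\<in>PF. p) \<le> q" .
      hence "real (\<Prod>p\<in>PF. p) \<le> real q" by (simp only: of_nat_le_iff)
      thus "(\<Prod>p\<in>PF. real p) \<le> real q" by simp
    qed (use e in \<open>auto simp: prod_nonneg\<close>)
    finally show ?thesis .
    qed
    have "(4::real) ^ card PF \<le> 4 ^ B * real q powr \<epsilon>"
    proof -
      have "(\<Prod>p\<in>T. (4::real)) \<le> real q powr \<epsilon>" using e3 X by linarith
      thus ?thesis unfolding e1 using e2 by (intro mult_mono) auto
    qed
    thus "(4::real) ^ card (prime_factors q) \<le> 4 ^ B * real q powr \<epsilon>"
      unfolding PF_def .
  qed
qed



theorem mainTheorem8: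
  "\<forall>\<epsilon>::real. \<epsilon> > 0 \<longrightarrow> (\<exists>C::real. \<forall>(q::nat) (\<alpha>2::int) (q1::nat) (q2::nat) (N::nat).
      odd q \<and> coprime \<alpha>2 (int q) \<and> q1 > 1 \<and> q2 > 0 \<and> q1 * q2 = rad q \<and> N \<le> q \<longrightarrow>
      \<bar>real_of_int (Lsum \<alpha>2 q1 q2 N)\<bar> \<le> C * real N * real q1 ^ 2 * real q powr \<epsilon>)"
proof (intro allI impI)
  fix \<epsilon> :: real assume e: "\<epsilon> > 0"
  obtain C0 where C0: "C0 > 0" "\<forall>q::nat. q > 0 \<longrightarrow> (4::real) ^ card (prime_factors q) \<le> C0 * real q powr \<epsilon>"
    using omega_bound[OF e] by blast
  show "\<exists>C::real. \<forall>(q::nat) (\<alpha>2::int) (q1::nat) (q2::nat) (N::nat).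
      odd q \<and> coprime \<alpha>2 (int q) \<and> q1 > 1 \<and> q2 > 0 \<and> q1 * q2 = rad q \<and> N \<le> q \<longrightarrow>
      \<bar>real_of_int (Lsum \<alpha>2 q1 q2 N)\<bar> \<le> C * real N * real q1 ^ 2 * real q powr \<epsilon>"
  proof (intro exI[of _ "6 * C0"] allI impI)
    fix q :: nat and \<alpha> :: int and q1 q2 N :: nat
    assume h: "odd q \<and> coprime \<alpha> (int q) \<and> q1 > 1 \<and> q2 > 0 \<and> q1 * q2 = rad q \<and> N \<le> q"
    have oq: "odd q" and ca: "coprime \<alpha> (int q)" and q1g: "q1 > 1" and q2g: "q2 > 0"
      and qq: "q1 * q2 = rad q" using h by auto
    have q0: "q > 0" using oq by (cases q) auto
    define P1 where "P1 = prime_factors q1"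
    define P2 where "P2 = prime_factors q2"
    have radm: "multiplicity p (rad q) = (if p \<in> prime_factors q then 1 else 0)" if "prime p" for p
    proof -
      have "rad q = (\<Prod>p\<in>prime_factors q. p ^ (\<lambda>_. 1::nat) p)" unfolding rad_def by simp
      moreover have "multiplicity p (\<Prod>p\<in>prime_factors q. p ^ (\<lambda>_. 1::nat) p)
          = (if p \<in> prime_factors q then (\<lambda>_. 1::nat) p else 0)"
        by (rule multiplicity_prod_prime_powers) (auto simp: in_prime_factors_imp_prime that)
      ultimately show ?thesis by simp
    qed
    have msum: "multiplicity p q1 + multiplicity p q2 = multiplicity p (rad q)" if "prime p" for p
      using prime_elem_multiplicity_mult_distrib[of p q1 q2] that q1g q2g qq by simp
    have m1: "multiplicity p q1 = 1 \<and> multiplicity p q2 = 0 \<and> p \<in> prime_factors q" if "p \<in> P1" for p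
    proof -
      have pp: "prime p" "multiplicity p q1 > 0" using that unfolding P1_def
        by (auto simp: prime_factors_multiplicity)
      have "multiplicity p (rad q) \<le> 1" using radm[OF pp(1)] by simp
      hence a: "multiplicity p q1 = 1 \<and> multiplicity p q2 = 0" using msum[OF pp(1)] pp(2) by linarith
      hence "multiplicity p (rad q) = 1" using msum[OF pp(1)] by simp
      moreover have "p \<notin> prime_factors q \<Longrightarrow> multiplicity p (rad q) = 0" using radm[OF pp(1)] by simp
      ultimately have "p \<in> prime_factors q" by linarith
      thus ?thesis using a by simp
    qed
    have m2: "p \<in> prime_factors q" if "p \<in> P2" for p
    proof -
      have pp: "prime p" "multiplicity p q2 > 0" using that unfolding P2_def
        by (auto simp: prime_factors_multiplicity)
      hence "multiplicity p (rad q) > 0" using msum[OF pp(1)] by linarith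
      moreover have "p \<notin> prime_factors q \<Longrightarrow> multiplicity p (rad q) = 0" using radm[OF pp(1)] by simp
      ultimately show ?thesis by linarith
    qed
    have disj: "P1 \<inter> P2 = {}"
    proof (rule ccontr)
      assume "P1 \<inter> P2 \<noteq> {}"
      then obtain p where p: "p \<in> P1" "p \<in> P2" by blast
      have "multiplicity p q2 > 0" using p(2) unfolding P2_def by (auto simp: prime_factors_multiplicity)
      thus False using m1[OF p(1)] by simp
    qed
    have fP1: "finite P1" and fP2: "finite P2" unfolding P1_def P2_def by auto
    have hP2: "\<forall>p\<in>P2. prime p" unfolding P2_def by auto
    have ne: "P1 \<noteq> {}"
    proof -
      obtain p where p: "prime p" "p dvd q1" using prime_factor_nat[of q1] q1g by auto
      hence "p \<in> P1" unfolding P1_def using q1g by (intro prime_factorsI) auto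
      thus ?thesis by blast
    qed
    have hP1: "\<forall>p\<in>P1. prime p \<and> p > 2 \<and> \<not> int p dvd \<alpha>"
    proof
      fix p assume p: "p \<in> P1"
      have pp: "prime p" using p unfolding P1_def by auto
      have pq: "p dvd q" using m1[OF p] by auto
      have "p \<noteq> 2" using pq oq by auto
      moreover have "p \<ge> 2" using pp by (rule prime_ge_2_nat)
      ultimately have "p > 2" by simp
      moreover have "\<not> int p dvd \<alpha>"
      proof
        assume "int p dvd \<alpha>"
        moreover have "int p dvd int q" using pq by simp
        ultimately have "is_unit (int p)" using ca coprime_common_divisor by blast
        thus False using pp by simp
      qed
      ultimately show "prime p \<and> p > 2 \<and> \<not> int p dvd \<alpha>" using pp by simp
    qed
    have prodP1: "\<Prod>P1 = q1"
    proof -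
      have "(\<Prod>p\<in>P1. p ^ multiplicity p q1) = q1" unfolding P1_def using prod_prime_factors[of q1] q1g by simp
      moreover have "(\<Prod>p\<in>P1. p ^ multiplicity p q1) = (\<Prod>p\<in>P1. p)" using m1 by (intro prod.cong) auto
      ultimately show ?thesis by simp
    qed
    have Jac: "Jacobi a q1 = (\<Prod>p\<in>P1. Legendre a (int p))" for a
      unfolding Jacobi_def P1_def[symmetric] using m1 by (intro prod.cong) auto
    have cop: "coprime a (int q2) \<longleftrightarrow> (\<forall>p\<in>P2. \<not> int p dvd a)" for a
    proof
      assume c: "coprime a (int q2)"
      show "\<forall>p\<in>P2. \<not> int p dvd a"
      proof (intro ballI notI)
        fix p assume p: "p \<in> P2" "int p dvd a"
        have "p dvd q2" using p(1) unfolding P2_def by auto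
        hence "int p dvd int q2" by simp
        hence "is_unit (int p)" using c p(2) coprime_common_divisor by blast
        hence "p = 1" by simp
        moreover have "prime p" using hP2 p(1) by blast
        ultimately show False by simp
      qed
    next
      assume nd: "\<forall>p\<in>P2. \<not> int p dvd a"
      show "coprime a (int q2)"
      proof (rule ccontr)
        assume nc: "\<not> coprime a (int q2)"
        define d where "d = gcd a (int q2)"
        have d0: "d \<ge> 0" unfolding d_def by simp
        have "d \<noteq> 1" using nc unfolding d_def by (simp add: coprime_iff_gcd_eq_1)
        hence "nat d \<noteq> 1" using d0 by simp
        then obtain p where p: "prime p" "p dvd nat d" using prime_factor_nat by blast
        hence "int p dvd d" using d0 by (metis int_nat_eq of_nat_dvd_iff)
        hence pa: "int p dvd a" and pq: "int p dvd int q2" unfolding d_def by auto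
        have "p dvd q2" using pq by simp
        hence "p \<in> P2" unfolding P2_def using p q2g by (intro prime_factorsI) auto
        thus False using nd pa by blast
      qed
    qed
    have LB: "\<bar>real_of_int (Lsum \<alpha> q1 q2 N)\<bar> \<le> 2 * (2 * real N + 1) * (real (\<Prod>P1) * 4 ^ card P2)"
      by (rule Lsum_bound[OF fP1 ne hP1 fP2 hP2 disj Jac cop])
    show "\<bar>real_of_int (Lsum \<alpha> q1 q2 N)\<bar> \<le> 6 * C0 * real N * real q1 ^ 2 * real q powr \<epsilon>"
    proof (cases "N = 0")
      case True
      have "Lsum \<alpha> q1 q2 N = 0"
        unfolding Lsum_def
      proof (rule sum.neutral, clarify)
        fix x1 x2 :: int
        assume "x1 \<in> {-int N..int N}" "x2 \<in> {-int N..int N}"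
        hence "x1 = 0" "x2 = 0" using True by auto
        moreover obtain p where p: "p \<in> P1" using ne by blast
        moreover have "Legendre 0 (int p) = 0" unfolding Legendre_def by simp
        ultimately show "Jacobi (x1^2 + \<alpha> * x2^2) q1 = 0" unfolding Jac using fP1
          by (simp add: prod_zero_iff) blast
      qed
      thus ?thesis using True by simp
    next
      case False
      hence N1: "real N \<ge> 1" by simp
      have a: "2 * (2 * real N + 1) \<le> 6 * real N" using N1 by simp
      have "card P2 \<le> card (prime_factors q)" using m2 by (intro card_mono) auto
      hence "(4::real) ^ card P2 \<le> 4 ^ card (prime_factors q)" by (intro power_increasing) auto
      also have "\<dots> \<le> C0 * real q powr \<epsilon>" using C0(2) q0 by blast
      finally have b1: "(4::real) ^ card P2 \<le> C0 * real q powr \<epsilon>" .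
      have b2: "real q1 \<le> real q1 ^ 2" using q1g by (simp add: power2_eq_square)
      have b: "real (\<Prod>P1) * 4 ^ card P2 \<le> real q1 ^ 2 * (C0 * real q powr \<epsilon>)"
        unfolding prodP1 using b1 b2 by (intro mult_mono) auto
      have "2 * (2 * real N + 1) * (real (\<Prod>P1) * 4 ^ card P2) \<le> 6 * real N * (real q1 ^ 2 * (C0 * real q powr \<epsilon>))"
      proof (rule mult_mono[OF a b])
        show "0 \<le> 6 * real N" by simp
        have "0 \<le> real (\<Prod>P1)" by (rule of_nat_0_le_iff)
        thus "0 \<le> real (\<Prod>P1) * 4 ^ card P2" by simp
      qed
      also have "\<dots> = 6 * C0 * real N * real q1 ^ 2 * real q powr \<epsilon>" by (simp add: algebra_simps)
      finally show ?thesis using LB by linarith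
    qed
  qed
qed

end
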